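(* Let $A_p\in C[0,\infty)$ be real-valued and consider the Maxwell--Bloch system on $\mathbb X=\mathbb R^2\times S^3$, \[ \dot A=B,\quad \dot B=-\Omega^2A-\sigma B+cj,\quad i\hbar\dot C_1=\hbar\omega_1C_1+iaC_2,\quad i\hbar\dot C_2=\hbar\omega_2C_2-iaC_1, \] with $j=2q\,\mathrm{Im}[\overline{C_1}C_2]$, $a(t)=\frac qc[A(t)+A_p(t)]$. Let $\dot Y(t)=F(Y(t),t)$, $t\ge0$, be the induced reduced dynamics on $\mathbb Y=\mathbb X/U(1)=\mathbb R^2\times S^2$. Then for every $Y_0\in\mathbb Y$ the reduced equation admits a unique global solution $Y(t)=(A(t),B(t),C_*(t))$, $t\ge0$, with $Y(0)=Y_0$.
   Context: Parameters: $\Omega,\sigma,c,\hbar,p>0$, real $\omega_2>\omega_1$, $\omega=\omega_2-\omega_1$, $q=\omega p$. Here $S^3=\{C=(C_1,C_2)\in\mathbb C^2:|C_1|^2+|C_2|^2=1\}$. The group $U(1)$ acts on $\mathbb X$ by $g(\theta)(A,B,C)=(A,B,e^{i\theta}C)$; this action commutes with the Maxwell--Bloch flow. The quotient $\mathbb Y=\mathbb X/U(1)$ is identified with $\mathbb R^2\times S^2$ via the map $\Pi(A,B,C)=(A,B,h(C))$, where $h:S^3\to S^2$ is the Hopf fibration, $C_*=h(C)$. The reduced dynamics $\dot Y=F(Y,t)$ is the time-dependent vector field on $\mathbb Y$ (smooth in $Y$, continuous in $t$) obtained by pushing forward the Maxwell--Bloch vector field under $\Pi$, so that $\Pi$ maps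 Maxwell--Bloch solutions to solutions of the reduced equation. *)

theory Defs
  imports "HOL-Analysis.Analysis"
begin

definition MB_space :: "(real \<times> real \<times> complex \<times> complex) set" where
  "MB_space = {(A, B, C1, C2). (cmod C1)^2 + (cmod C2)^2 = 1}"

definition Red_space :: "(real \<times> real \<times> real \<times> real \<times> real) set" where
  "Red_space = {(A, B, x, y, z). x^2 + y^2 + z^2 = 1}"

definition hopf :: "complex \<Rightarrow> complex \<Rightarrow> real \<times> real \<times> real" where
  "hopf C1 C2 = (2 * Re (cnj C1 * C2), 2 * Im (cnj C1 * C2), (cmod C1)^2 - (cmod C2)^2)"

definition Pi_map :: "real \<times> real \<times> complex \<times> complex \<Rightarrow> real \<times> real \<times> real \<times> real \<times> real" where
  "Pi_map X = (case X of (A, B, C1, C2) \<Rightarrow> (A, B, hopf C1 C2))"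

definition mb_field ::
  "real \<Rightarrow> real \<Rightarrow> real \<Rightarrow> real \<Rightarrow> real \<Rightarrow> real \<Rightarrow> real \<Rightarrow> (real \<Rightarrow> real) \<Rightarrow>
   real \<times> real \<times> complex \<times> complex \<Rightarrow> real \<Rightarrow> real \<times> real \<times> complex \<times> complex" where
  "mb_field Omega sig c hb p w1 w2 Ap X t =
     (case X of (A, B, C1, C2) \<Rightarrow>
       (let q = (w2 - w1) * p;
            j = 2 * q * Im (cnj C1 * C2);
            a = complex_of_real (q / c * (A + Ap t))
        in (B,
            - (Omega^2) * A - sig * B + c * j,
            (complex_of_real (hb * w1) * C1 + \<i> * a * C2) / (\<i> * complex_of_real hb),
            (complex_of_real (hb * w2) * C2 - \<i> * a * C1) / (\<i> * complex_of_real hb))))"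

definition is_pushforward ::
  "real \<Rightarrow> real \<Rightarrow> real \<Rightarrow> real \<Rightarrow> real \<Rightarrow> real \<Rightarrow> real \<Rightarrow> (real \<Rightarrow> real) \<Rightarrow>
   (real \<times> real \<times> real \<times> real \<times> real \<Rightarrow> real \<Rightarrow> real \<times> real \<times> real \<times> real \<times> real) \<Rightarrow> bool" where
  "is_pushforward Omega sig c hb p w1 w2 Ap F \<longleftrightarrow>
     (\<forall>X\<in>MB_space. \<forall>t\<ge>0. \<exists>D. (Pi_map has_derivative D) (at X) \<and>
         D (mb_field Omega sig c hb p w1 w2 Ap X t) = F (Pi_map X) t)"

definition reduced_solution ::
  "(real \<times> real \<times> real \<times> real \<times> real \<Rightarrow> real \<Rightarrow> real \<times> real \<times> real \<times> real \<times> real) \<Rightarrow>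
   (real \<Rightarrow> real \<times> real \<times> real \<times> real \<times> real) \<Rightarrow> real \<times> real \<times> real \<times> real \<times> real \<Rightarrow> bool" where
  "reduced_solution F Y Y0 \<longleftrightarrow> Y 0 = Y0 \<and>
     (\<forall>t\<ge>0. Y t \<in> Red_space \<and> (Y has_vector_derivative F (Y t) t) (at t within {0..}))"

end

theory Submission
  imports Defs
begin


lemma clamp_real_in: "0 \<le> (T::real) \<Longrightarrow> clamp 0 T x \<in> {0..T}"
  using clamp_in_interval[of 0 T x] by auto

lemma clamp_real_id: "x \<in> {0..(T::real)} \<Longrightarrow> clamp 0 T x = x"
  using clamp_cancel_cbox[of x 0 T] by auto

lemma picard:
  fixes H :: "'a::banach \<Rightarrow> real \<Rightarrow> 'a" and T L0 :: real and y0 :: 'a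
  assumes T: "0 \<le> T" and L0: "0 \<le> L0"
   and lip: "\<And>t u v. t \<in> {0..T} \<Longrightarrow> norm (H u t - H v t) \<le> L0 * norm (u - v)"
   and cont: "\<And>u. continuous_on {0..T} u \<Longrightarrow> continuous_on {0..T} (\<lambda>t. H (u t) t)"
  shows "\<exists>y. y 0 = y0 \<and> (\<forall>t\<in>{0..T}. (y has_vector_derivative H (y t) t) (at t within {0..T})) \<and>
     (\<forall>z. z 0 = y0 \<and> (\<forall>t\<in>{0..T}. (z has_vector_derivative H (z t) t) (at t within {0..T}))
        \<longrightarrow> (\<forall>t\<in>{0..T}. z t = y t))"
proof -
  define L where "L = 2*L0+1"
  have Lpos: "L > 0" using L0 by (simp add: L_def)
  have Lnz: "L \<noteq> 0" using Lpos by simp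
  define P where "P f t = exp(-(L*t)) *\<^sub>R (y0 + integral {0..t} (\<lambda>s. H (exp(L * s) *\<^sub>R f s) s))"
    for f :: "real \<Rightarrow> 'a" and t
  have hcont: "continuous_on {0..T} (\<lambda>s. H (exp(L * s) *\<^sub>R f s) s)" if "continuous_on {0..T} f" for f
    by (rule cont) (intro continuous_intros that)
  have Pcont: "continuous_on {0..T} (P f)" if "continuous_on {0..T} f" for f
    unfolding P_def
    by (intro continuous_intros indefinite_integral_continuous_1 integrable_continuous_real hcont that)
  have "\<forall>f::real \<Rightarrow>\<^sub>C 'a. \<exists>g::real \<Rightarrow>\<^sub>C 'a. \<forall>x. g x = P f (clamp 0 T x)"
  proof
    fix f :: "real \<Rightarrow>\<^sub>C 'a"
    have "continuous_on (cbox 0 T) (P f)" using Pcont[of f] by simp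
    then obtain g :: "real \<Rightarrow>\<^sub>C 'a" where "\<And>x. g x = P f (clamp 0 T x)"
      by (rule continuous_on_cbox_bcontfunE) blast
    then show "\<exists>g::real \<Rightarrow>\<^sub>C 'a. \<forall>x. g x = P f (clamp 0 T x)" by blast
  qed
  then obtain Phi where Phi: "\<And>f x. apply_bcontfun (Phi f) x = P (apply_bcontfun f) (clamp 0 T x)" by metis
  have key: "norm (P f t - P g t) \<le> 1/2 * D"
    if t: "t \<in> {0..T}" and fg: "\<And>s. norm (f s - g s) \<le> D" and cf: "continuous_on {0..T} f"
      and cg: "continuous_on {0..T} g" for f g D t
  proof -
    define hf where "hf s = H (exp(L * s) *\<^sub>R f s) s" for s
    define hg where "hg s = H (exp(L * s) *\<^sub>R g s) s" for s
    have D0: "0 \<le> D" using fg[of 0] norm_ge_zero order_trans by blast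
    have sub: "{0..t} \<subseteq> {0..T}" using t by auto
    have if': "hf integrable_on {0..t}" unfolding hf_def
      by (rule integrable_continuous_real, rule continuous_on_subset[OF hcont[OF cf] sub])
    have ig': "hg integrable_on {0..t}" unfolding hg_def
      by (rule integrable_continuous_real, rule continuous_on_subset[OF hcont[OF cg] sub])
    have anti: "((\<lambda>s. L0 * D * exp(L * s)) has_integral (L0*D*exp(L*t)/L - L0*D*exp(L*0)/L)) {0..t}"
      using t
      by (intro fundamental_theorem_of_calculus)
         (auto intro!: derivative_eq_intros simp: has_real_derivative_iff_has_vector_derivative[symmetric] Lnz)
    have "norm (integral {0..t} (\<lambda>s. hf s - hg s)) \<le> integral {0..t} (\<lambda>s. L0 * D * exp(L * s))"
    proof (rule integral_norm_bound_integral)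
      show "(\<lambda>s. hf s - hg s) integrable_on {0..t}" using if' ig' by (rule integrable_diff)
      show "(\<lambda>s. L0 * D * exp (L * s)) integrable_on {0..t}" using anti by blast
      fix s assume s: "s \<in> {0..t}"
      have "norm (hf s - hg s) \<le> L0 * norm (exp(L * s) *\<^sub>R f s - exp(L * s) *\<^sub>R g s)"
        unfolding hf_def hg_def using s t by (intro lip) auto
      also have "\<dots> = L0 * exp(L * s) * norm (f s - g s)"
        by (simp flip: scaleR_diff_right)
      also have "\<dots> \<le> L0 * exp(L * s) * D" using fg[of s] L0 by (simp add: mult_left_mono)
      finally show "norm (hf s - hg s) \<le> L0 * D * exp (L * s)" by (simp add: ac_simps)
    qed
    also have "\<dots> = L0*D*(exp(L*t) - 1)/L" using integral_unique[OF anti] by (simp add: diff_divide_distrib right_diff_distrib)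
    finally have nb: "norm (integral {0..t} (\<lambda>s. hf s - hg s)) \<le> L0*D*(exp(L*t) - 1)/L" .
    have "P f t - P g t = exp(-(L*t)) *\<^sub>R integral {0..t} (\<lambda>s. hf s - hg s)"
      unfolding P_def hf_def[symmetric] hg_def[symmetric]
      using integral_diff[OF if' ig'] by (simp add: scaleR_diff_right[symmetric])
    then have "norm (P f t - P g t) = exp(-(L*t)) * norm (integral {0..t} (\<lambda>s. hf s - hg s))" by simp
    also have "\<dots> \<le> exp(-(L*t)) * (L0*D*(exp(L*t) - 1)/L)" using nb by (intro mult_left_mono) auto
    also have "\<dots> = L0*D*(1 - exp(-(L*t)))/L"
      by (simp add: field_simps exp_minus)
    also have "\<dots> \<le> L0*D/L"
      using L0 D0 Lpos mult_left_mono[of "1 - exp(-(L*t))" 1 "L0*D"]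
      by (intro divide_right_mono) auto
    also have "\<dots> \<le> 1/2 * D"
      using L0 D0 Lpos by (simp add: L_def field_simps mult_right_mono)
    finally show ?thesis .
  qed
  have contr: "dist (Phi f) (Phi g) \<le> 1/2 * dist f g" for f g
  proof (rule dist_bound)
    fix x
    have "norm (P (apply_bcontfun f) (clamp 0 T x) - P (apply_bcontfun g) (clamp 0 T x)) \<le> 1/2 * dist f g"
    proof (rule key)
      show "clamp 0 T x \<in> {0..T}" using T by (rule clamp_real_in)
      fix s show "norm (apply_bcontfun f s - apply_bcontfun g s) \<le> dist f g"
        using dist_bounded[of f s g] by (simp add: dist_norm)
    qed auto
    then show "dist (Phi f x) (Phi g x) \<le> 1/2 * dist f g" unfolding dist_norm Phi .
  qed
  obtain phi where phi: "Phi phi = phi" and phiu: "\<And>psi. Phi psi = psi \<Longrightarrow> psi = phi"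
  proof -
    have "\<exists>!x. Phi x = x" by (rule banach_fix_type[of "1/2"]) (use contr in auto)
    then show ?thesis using that by metis
  qed
  define y where "y t = exp(L*t) *\<^sub>R phi t" for t
  have ycont: "continuous_on {0..T} y" unfolding y_def by (intro continuous_intros) auto
  have yeq: "y t = y0 + integral {0..t} (\<lambda>s. H (y s) s)" if "t \<in> {0..T}" for t
  proof -
    have "phi t = P phi t" using Phi[of phi t] phi that by (simp add: clamp_real_id)
    then show ?thesis unfolding y_def P_def by (simp add: exp_minus)
  qed
  show ?thesis
  proof (intro exI conjI ballI allI impI)
    show "y 0 = y0" using yeq[of 0] T by simp
    fix t assume t: "t \<in> {0..T}"
    have "((\<lambda>t. y0 + integral {0..t} (\<lambda>s. H (y s) s)) has_vector_derivative H (y t) t) (at t within {0..T})"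
      using integral_has_vector_derivative[OF cont[OF ycont] t]
      by (intro derivative_eq_intros) auto
    then show "(y has_vector_derivative H (y t) t) (at t within {0..T})"
      by (rule has_vector_derivative_transform[OF t, rotated]) (simp add: yeq)
  next
    fix z t assume z: "z 0 = y0 \<and> (\<forall>t\<in>{0..T}. (z has_vector_derivative H (z t) t) (at t within {0..T}))"
      and t: "t \<in> {0..T}"
    have zc: "continuous_on {0..T} z"
      using z by (auto simp: continuous_on_eq_continuous_within intro: has_vector_derivative_continuous)
    have "continuous_on (cbox 0 T) (\<lambda>t. exp(-(L*t)) *\<^sub>R z t)"
      using zc by (auto intro!: continuous_intros)
    then obtain psi :: "real \<Rightarrow>\<^sub>C 'a" where psi1: "\<And>x. x \<in> cbox 0 T \<Longrightarrow> psi x = exp(-(L*x)) *\<^sub>R z x"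
      and psi2: "\<And>x. psi x = exp(-(L*clamp 0 T x)) *\<^sub>R z (clamp 0 T x)"
      by (rule continuous_on_cbox_bcontfunE) blast
    have "Phi psi = psi"
    proof (rule bcontfun_eqI)
      fix x
      define s where "s = clamp 0 T x"
      have s: "s \<in> {0..T}" unfolding s_def using T by (rule clamp_real_in)
      have "integral {0..s} (\<lambda>r. H (exp(L * r) *\<^sub>R psi r) r) = integral {0..s} (\<lambda>r. H (z r) r)"
        by (rule integral_cong) (use s in \<open>auto simp: psi1 exp_minus\<close>)
      also have "\<dots> = z s - z 0"
      proof (rule integral_unique, rule fundamental_theorem_of_calculus)
        show "0 \<le> s" using s by auto
        fix r assume r: "r \<in> {0..s}"
        have "(z has_vector_derivative H (z r) r) (at r within {0..T})" using z s r by auto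
        then show "(z has_vector_derivative H (z r) r) (at r within {0..s})"
          by (rule has_vector_derivative_within_subset) (use s in auto)
      qed
      finally show "Phi psi x = psi x"
        using z by (simp add: Phi psi2 P_def s_def[symmetric] exp_minus)
    qed
    then have "psi = phi" by (rule phiu)
    then have "psi t = phi t" by simp
    then show "z t = y t" using psi1[of t] t by (simp add: y_def exp_minus)
  qed
qed




lemma Pi_alt: "Pi_map = (\<lambda>X. (fst X, fst (snd X),
   2*(Re (fst (snd (snd X))) * Re (snd (snd (snd X))) + Im (fst (snd (snd X))) * Im (snd (snd (snd X)))),
   2*(Re (fst (snd (snd X))) * Im (snd (snd (snd X))) - Im (fst (snd (snd X))) * Re (snd (snd (snd X)))),
   Re (fst (snd (snd X)))^2 + Im (fst (snd (snd X)))^2 - Re (snd (snd (snd X)))^2 - Im (snd (snd (snd X)))^2))"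
  by (auto simp: fun_eq_iff Pi_map_def hopf_def cmod_power2 split: prod.splits)

lemma Pi_deriv: "(Pi_map has_derivative (\<lambda>h. (fst h, fst (snd h),
   2*(Re (fst (snd (snd h))) * Re (snd (snd (snd X))) + Re (fst (snd (snd X))) * Re (snd (snd (snd h)))
    + Im (fst (snd (snd h))) * Im (snd (snd (snd X))) + Im (fst (snd (snd X))) * Im (snd (snd (snd h)))),
   2*(Re (fst (snd (snd h))) * Im (snd (snd (snd X))) + Re (fst (snd (snd X))) * Im (snd (snd (snd h)))
    - Im (fst (snd (snd h))) * Re (snd (snd (snd X))) - Im (fst (snd (snd X))) * Re (snd (snd (snd h)))),
   2*Re (fst (snd (snd X))) * Re (fst (snd (snd h))) + 2*Im (fst (snd (snd X))) * Im (fst (snd (snd h)))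
   - 2*Re (snd (snd (snd X))) * Re (snd (snd (snd h))) - 2*Im (snd (snd (snd X))) * Im (snd (snd (snd h)))))) (at X)"
  unfolding Pi_alt
  by (rule derivative_eq_intros refl | simp)+ (simp add: fun_eq_iff algebra_simps)

lemma hopf_surj:
  assumes "x^2 + y^2 + z^2 = (1::real)"
  shows "\<exists>C1 C2. (cmod C1)^2 + (cmod C2)^2 = 1 \<and> hopf C1 C2 = (x, y, z)"
proof (cases "z = -1")
  case True
  then have "x^2 + y^2 = 0" using assms by simp
  then have "x = 0" "y = 0" by (auto simp: add_nonneg_eq_0_iff)
  then show ?thesis using True by (intro exI[of _ 0] exI[of _ 1]) (simp add: hopf_def)
next
  case False
  have z1: "z^2 \<le> 1" using assms by (metis add_nonneg_nonneg le_add_same_cancel2 zero_le_power2 add.assoc add.commute)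
  then have "\<bar>z\<bar> \<le> 1" by (simp add: abs_square_le_1)
  then have zp: "1 + z > 0" using False by auto
  define s where "s = sqrt ((1+z)/2)"
  have sp: "s > 0" using zp by (simp add: s_def)
  have s2: "s^2 = (1+z)/2" using zp by (simp add: s_def)
  define C2 where "C2 = Complex (x/(2 * s)) (y/(2 * s))"
  have n2: "(cmod C2)^2 = (x^2+y^2)/(4 * s^2)" by (simp add: C2_def cmod_power2 power_divide add_divide_distrib power_mult_distrib)
  have xy: "x^2 + y^2 = (1+z)*(1-z)" using assms by (simp add: algebra_simps power2_eq_square)
  have n2': "(cmod C2)^2 = (1-z)/2" unfolding n2 s2 xy using zp by (simp add: field_simps)
  show ?thesis
  proof -
    have "(cmod (complex_of_real s))\<^sup>2 + (cmod C2)\<^sup>2 = 1" using n2' s2 sp by (simp add: field_simps)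
    moreover have "hopf (complex_of_real s) C2 = (x, y, z)"
      unfolding hopf_def using n2' s2 sp by (simp add: C2_def field_simps)
    ultimately show ?thesis by blast
  qed
qed

definition rr :: "'a::real_normed_vector \<Rightarrow> 'a" where "rr v = (1 / max 1 (norm v)) *\<^sub>R v"

lemma rr_bound: "norm (rr v) \<le> 1"
  by (simp add: rr_def field_simps)

lemma rr_lip: "norm (rr u - rr v) \<le> 2 * norm (u - v)"
proof -
  define mu where "mu = max 1 (norm u)"
  define mv where "mv = max 1 (norm v)"
  have mu: "mu \<ge> 1" and mv: "mv \<ge> 1" by (auto simp: mu_def mv_def)
  have nv: "norm v \<le> mv" by (simp add: mv_def)
  have dm: "\<bar>mv - mu\<bar> \<le> norm (u - v)"
  proof -
    have "\<bar>mv - mu\<bar> \<le> \<bar>norm v - norm u\<bar>" unfolding mu_def mv_def by (simp add: abs_le_iff max_def) linarith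
    also have "\<dots> \<le> norm (u - v)" by (metis norm_minus_commute norm_triangle_ineq3)
    finally show ?thesis .
  qed
  have eq: "rr u - rr v = (1/mu) *\<^sub>R (u - v) + (1/mu - 1/mv) *\<^sub>R v"
    by (simp add: rr_def mu_def[symmetric] mv_def[symmetric] algebra_simps)
  have "norm ((1/mu) *\<^sub>R (u - v)) \<le> norm (u - v)"
  proof -
    have "norm ((1/mu) *\<^sub>R (u - v)) = (1/mu) * norm (u - v)" using mu by simp
    also have "\<dots> \<le> 1 * norm (u - v)" using mu by (intro mult_right_mono) auto
    finally show ?thesis by simp
  qed
  moreover have "norm ((1/mu - 1/mv) *\<^sub>R v) \<le> norm (u - v)"
  proof -
    have "norm ((1/mu - 1/mv) *\<^sub>R v) = \<bar>mv - mu\<bar> / (mu * mv) * norm v"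
      using mu mv by (simp add: field_simps)
    also have "\<dots> \<le> \<bar>mv - mu\<bar> / (mu * mv) * mv"
      using nv mu mv by (intro mult_left_mono) auto
    also have "\<dots> = \<bar>mv - mu\<bar> / mu" using mv by simp
    also have "\<dots> \<le> \<bar>mv - mu\<bar>" using mu by (simp add: divide_le_eq mult_le_cancel_left1 mult_left_le)
    finally show ?thesis using dm by linarith
  qed
  ultimately show ?thesis unfolding eq by (smt (verit) norm_triangle_ineq)
qed

lemma norm5: "norm ((a::real), (b::real), (c::real), (d::real), (e::real)) \<le> \<bar>a\<bar> + \<bar>b\<bar> + \<bar>c\<bar> + \<bar>d\<bar> + \<bar>e\<bar>"
proof -
  have "norm (a, b, c, d, e) \<le> norm a + norm (b, c, d, e)" by (rule norm_Pair_le)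
  also have "norm (b, c, d, e) \<le> norm b + norm (c, d, e)" by (rule norm_Pair_le)
  also have "norm (c, d, e) \<le> norm c + norm (d, e)" by (rule norm_Pair_le)
  also have "norm (d, e) \<le> norm d + norm e" by (rule norm_Pair_le)
  finally show ?thesis by simp
qed

lemma comp3:
  fixes w :: "real \<times> real \<times> real"
  shows "\<bar>fst w\<bar> \<le> norm w" "\<bar>snd (snd w)\<bar> \<le> norm w"
proof -
  show "\<bar>fst w\<bar> \<le> norm w" using norm_fst_le[of "fst w" "snd w"] by simp
  have "norm (snd w) \<le> norm w" using norm_snd_le[of "snd w" "fst w"] by simp
  moreover have "norm (snd (snd w)) \<le> norm (snd w)"
    using norm_snd_le[of "snd (snd w)" "fst (snd w)"] by simp
  ultimately show "\<bar>snd (snd w)\<bar> \<le> norm w" by simp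
qed

lemma comps5:
  fixes A B x y z A' B' x' y' z' :: real
  defines "d \<equiv> norm ((A, B, x, y, z) - (A', B', x', y', z'))"
  shows "\<bar>A - A'\<bar> \<le> d" "\<bar>B - B'\<bar> \<le> d" "\<bar>x - x'\<bar> \<le> d" "\<bar>y - y'\<bar> \<le> d"
    "norm ((x, y, z) - (x', y', z')) \<le> d"
proof -
  have e: "(A, B, x, y, z) - (A', B', x', y', z') = (A - A', B - B', x - x', y - y', z - z')" by simp
  have 1: "norm (B - B', x - x', y - y', z - z') \<le> d" unfolding d_def e by (rule norm_snd_le)
  have 2: "norm (x - x', y - y', z - z') \<le> d" using 1 norm_snd_le order_trans by blast
  have 3: "norm (y - y', z - z') \<le> d" using 2 norm_snd_le order_trans by blast
  show "\<bar>A - A'\<bar> \<le> d" unfolding d_def e using norm_fst_le by (metis real_norm_def)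
  show "\<bar>B - B'\<bar> \<le> d" using 1 norm_fst_le by (metis real_norm_def order_trans)
  show "\<bar>x - x'\<bar> \<le> d" using 2 norm_fst_le by (metis real_norm_def order_trans)
  show "\<bar>y - y'\<bar> \<le> d" using 3 norm_fst_le by (metis real_norm_def order_trans)
  show "norm ((x, y, z) - (x', y', z')) \<le> d" using 2 by simp
qed

lemma vd_fst: "(f has_vector_derivative D) F \<Longrightarrow> ((\<lambda>x. fst (f x)) has_vector_derivative fst D) F"
  unfolding has_vector_derivative_def by (drule has_derivative_fst) simp

lemma vd_snd: "(f has_vector_derivative D) F \<Longrightarrow> ((\<lambda>x. snd (f x)) has_vector_derivative snd D) F"
  unfolding has_vector_derivative_def by (drule has_derivative_snd) simp

lemma rr_cont: "continuous_on S f \<Longrightarrow> continuous_on S (\<lambda>x. rr (f x))"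
  unfolding rr_def by (intro continuous_intros) auto

locale mbl =
  fixes Omega sig c hb p w1 w2 :: real and Ap :: "real \<Rightarrow> real"
  assumes Om: "Omega > 0" and sg: "sig > 0" and cp: "c > 0" and hbp: "hb > 0" and pp: "p > 0"
    and ww: "w1 < w2" and Apc: "continuous_on {0..} Ap"
begin

definition "q = (w2 - w1) * p"
definition "om = w2 - w1"
definition "kk A t = q * (A + Ap t) / (c * hb)"

fun G :: "real \<times> real \<times> real \<times> real \<times> real \<Rightarrow> real \<Rightarrow> real \<times> real \<times> real \<times> real \<times> real" where
  "G (A, B, x, y, z) t = (B, - (Omega^2) * A - sig * B + c * q * y,
      om * y - 2 * kk A t * z, - (om * x), 2 * kk A t * x)"

lemma div_i: "hb \<noteq> 0 \<Longrightarrow> u / (\<i> * complex_of_real hb) = Complex (Im u / hb) (- Re u / hb)"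
  by (subst nonzero_divide_eq_eq) (auto simp: complex_eq_iff field_simps)

lemma mb_simp: "mb_field Omega sig c hb p w1 w2 Ap (A, B, C1, C2) t =
   (B, - (Omega^2) * A - sig * B + c * (2 * q * Im (cnj C1 * C2)),
    Complex (w1 * Im C1 + kk A t * Re C2) (- w1 * Re C1 + kk A t * Im C2),
    Complex (w2 * Im C2 - kk A t * Re C1) (- w2 * Re C2 - kk A t * Im C1))"
  using hbp cp unfolding mb_field_def Let_def
  by (simp add: div_i complex_eq_iff q_def kk_def) (simp add: field_simps)

lemma F_eq:
  assumes pf: "is_pushforward Omega sig c hb p w1 w2 Ap F" and Y: "Y \<in> Red_space" and t: "t \<ge> 0"
  shows "F Y t = G Y t"
proof -
  obtain A B x y z where Yd: "Y = (A, B, x, y, z)" and sph: "x^2 + y^2 + z^2 = 1"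
    using Y by (auto simp: Red_space_def)
  obtain C1 C2 where C: "(cmod C1)^2 + (cmod C2)^2 = 1" and h: "hopf C1 C2 = (x, y, z)"
    using hopf_surj[OF sph] by blast
  define X where "X = (A, B, C1, C2)"
  have XM: "X \<in> MB_space" using C by (simp add: X_def MB_space_def)
  have PX: "Pi_map X = Y" by (simp add: X_def Pi_map_def h Yd)
  obtain D where D: "(Pi_map has_derivative D) (at X)"
      and DF: "D (mb_field Omega sig c hb p w1 w2 Ap X t) = F (Pi_map X) t"
    using pf XM t unfolding is_pushforward_def by blast
  note Deq = has_derivative_unique[OF D Pi_deriv]
  have hx: "x = 2*(Re C1 * Re C2 + Im C1 * Im C2)" and hy: "y = 2*(Re C1 * Im C2 - Im C1 * Re C2)"
    and hz: "z = Re C1^2 + Im C1^2 - Re C2^2 - Im C2^2"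
    using h by (auto simp: hopf_def cmod_power2)
  have "F Y t = D (mb_field Omega sig c hb p w1 w2 Ap X t)" using DF PX by simp
  also have "\<dots> = G Y t"
    unfolding Yd X_def Deq hx hy hz
    by (simp add: mb_simp om_def algebra_simps power2_eq_square)
  finally show ?thesis .
qed


definition clR :: "real \<Rightarrow> real \<Rightarrow> real" where "clR R a = max (- R) (min R a)"

fun GR :: "real \<Rightarrow> real \<times> real \<times> real \<times> real \<times> real \<Rightarrow> real \<Rightarrow> real \<times> real \<times> real \<times> real \<times> real" where
  "GR R (A, B, x, y, z) t = (B, - (Omega^2) * A - sig * B + c * q * y,
      om * y - 2 * kk (clR R A) t * snd (snd (rr (x, y, z))), - (om * x),
      2 * kk (clR R A) t * fst (rr (x, y, z)))"

lemma GR_alt: "GR R Y t = (fst (snd Y), - (Omega^2) * fst Y - sig * fst (snd Y) + c * q * fst (snd (snd (snd Y))),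
      om * fst (snd (snd (snd Y))) - 2 * kk (clR R (fst Y)) t * snd (snd (rr (snd (snd Y)))),
      - (om * fst (snd (snd Y))),
      2 * kk (clR R (fst Y)) t * fst (rr (snd (snd Y))))"
  by (cases Y) auto

lemma GR_eq: "x^2 + y^2 + z^2 = 1 \<Longrightarrow> \<bar>A\<bar> \<le> R \<Longrightarrow> GR R (A, B, x, y, z) t = G (A, B, x, y, z) t"
  by (simp add: rr_def norm_Pair clR_def)

lemma q_pos: "q > 0" and om_pos: "om > 0"
  using pp ww by (auto simp: q_def om_def)

lemma GR_lip:
  assumes R: "R \<ge> 0" and P: "\<And>t. t \<in> {0..T} \<Longrightarrow> \<bar>Ap t\<bar> \<le> P" and t: "t \<in> {0..T}"
  shows "norm (GR R u t - GR R v t) \<le>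
    (1 + (Omega^2 + sig + c*q) + 2 * (om + 4 * (q*(R+P)/(c*hb)) + 2 * (q/(c*hb)))) * norm (u - v)"
proof -
  obtain A B x y z where u: "u = (A, B, x, y, z)" by (cases u) auto
  obtain A' B' x' y' z' where v: "v = (A', B', x', y', z')" by (cases v) auto
  define d where "d = norm (u - v)"
  note cs = comps5[where A=A and B=B and x=x and y=y and z=z and A'=A' and B'=B' and x'=x' and y'=y' and z'=z', folded u v, folded d_def]
  define K where "K = q*(R+P)/(c*hb)"
  define Q where "Q = q/(c*hb)"
  have Q0: "Q \<ge> 0" using q_pos cp hbp by (simp add: Q_def)
  define k where "k = kk (clR R A) t"
  define k' where "k' = kk (clR R A') t"
  have kb: "\<bar>k\<bar> \<le> K" if "k = kk (clR R a) t" for k a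
  proof -
    have "\<bar>clR R a + Ap t\<bar> \<le> R + P" using P[OF t] R by (simp add: clR_def abs_le_iff max_def min_def)
    then have "q * \<bar>clR R a + Ap t\<bar> \<le> q * (R + P)" using q_pos by (simp add: mult_left_mono)
    then show ?thesis using that q_pos cp hbp
      by (simp add: kk_def K_def abs_mult divide_right_mono)
  qed
  have k1: "\<bar>k\<bar> \<le> K" using kb k_def by blast
  have k1': "\<bar>k'\<bar> \<le> K" using kb k'_def by blast
  have K0: "K \<ge> 0" using k1 by linarith
  have kd: "\<bar>k - k'\<bar> \<le> Q * d"
  proof -
    have "\<bar>clR R A - clR R A'\<bar> \<le> \<bar>A - A'\<bar>" by (simp add: clR_def abs_le_iff max_def min_def) linarith
    then have "\<bar>clR R A - clR R A'\<bar> \<le> d" using cs(1) by linarith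
    moreover have "k - k' = Q * (clR R A - clR R A')"
      unfolding k_def k'_def kk_def Q_def using cp hbp by (simp add: field_simps)
    ultimately show ?thesis using Q0 by (simp add: abs_mult mult_left_mono)
  qed
  have prod: "\<bar>k * a - k' * b\<bar> \<le> K * (2 * d) + Q * d" if "\<bar>a - b\<bar> \<le> 2 * d" "\<bar>b\<bar> \<le> 1" for a b
  proof -
    have "k * a - k' * b = k * (a - b) + b * (k - k')" by (simp add: algebra_simps)
    then have "\<bar>k * a - k' * b\<bar> \<le> \<bar>k\<bar> * \<bar>a - b\<bar> + \<bar>b\<bar> * \<bar>k - k'\<bar>"
      by (simp add: abs_mult[symmetric] abs_triangle_ineq)
    also have "\<dots> \<le> K * (2 * d) + 1 * (Q * d)"
      using that k1 kd K0 by (intro add_mono mult_mono) auto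
    finally show ?thesis by simp
  qed
  have rl: "norm (rr (x, y, z) - rr (x', y', z')) \<le> 2 * d" using rr_lip cs(5) by (meson mult_left_mono order_trans zero_le_numeral)
  have rz: "\<bar>snd (snd (rr (x, y, z))) - snd (snd (rr (x', y', z')))\<bar> \<le> 2 * d"
    using comp3(2)[of "rr (x, y, z) - rr (x', y', z')"] rl by simp
  have rx: "\<bar>fst (rr (x, y, z)) - fst (rr (x', y', z'))\<bar> \<le> 2 * d"
    using comp3(1)[of "rr (x, y, z) - rr (x', y', z')"] rl by simp
  have bz: "\<bar>snd (snd (rr (x', y', z')))\<bar> \<le> 1"
    using comp3(2)[of "rr (x', y', z')"] rr_bound[of "(x', y', z')"] by simp
  have bx: "\<bar>fst (rr (x', y', z'))\<bar> \<le> 1"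
    using comp3(1)[of "rr (x', y', z')"] rr_bound[of "(x', y', z')"] by simp
  have p1: "\<bar>k * snd (snd (rr (x, y, z))) - k' * snd (snd (rr (x', y', z')))\<bar> \<le> K * (2 * d) + Q * d"
    by (rule prod[OF rz bz])
  have p2: "\<bar>k * fst (rr (x, y, z)) - k' * fst (rr (x', y', z'))\<bar> \<le> K * (2 * d) + Q * d"
    by (rule prod[OF rx bx])
  have "norm (GR R u t - GR R v t) \<le> \<bar>B - B'\<bar>
      + \<bar>- (Omega^2) * (A - A') - sig * (B - B') + c * q * (y - y')\<bar>
      + \<bar>om * (y - y') - 2 * (k * snd (snd (rr (x, y, z))) - k' * snd (snd (rr (x', y', z'))))\<bar>
      + \<bar>- (om * (x - x'))\<bar>
      + \<bar>2 * (k * fst (rr (x, y, z)) - k' * fst (rr (x', y', z')))\<bar>"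
  proof -
    have eqd: "GR R u t - GR R v t = (B - B', - (Omega^2) * (A - A') - sig * (B - B') + c * q * (y - y'),
       om * (y - y') - 2 * (k * snd (snd (rr (x, y, z))) - k' * snd (snd (rr (x', y', z')))),
       - (om * (x - x')), 2 * (k * fst (rr (x, y, z)) - k' * fst (rr (x', y', z'))))"
      unfolding u v k_def k'_def by (simp add: algebra_simps)
    show ?thesis unfolding eqd by (rule norm5)
  qed
  also have "\<dots> \<le> d + (Omega^2 * d + sig * d + c * q * d) + (om * d + 2 * (K * (2 * d) + Q * d))
      + om * d + 2 * (K * (2 * d) + Q * d)"
  proof -
    have a1: "\<bar>- (Omega^2) * (A - A') - sig * (B - B') + c * q * (y - y')\<bar> \<le> Omega^2 * d + sig * d + c * q * d"
    proof -
      have "\<bar>- (Omega^2) * (A - A') - sig * (B - B') + c * q * (y - y')\<bar>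
          \<le> Omega^2 * \<bar>A - A'\<bar> + sig * \<bar>B - B'\<bar> + c * q * \<bar>y - y'\<bar>"
      proof -
        have "\<bar>- (Omega^2) * (A - A')\<bar> = Omega^2 * \<bar>A - A'\<bar>" by (simp add: abs_mult)
        moreover have "\<bar>sig * (B - B')\<bar> = sig * \<bar>B - B'\<bar>" using sg by (simp add: abs_mult)
        moreover have "\<bar>c * q * (y - y')\<bar> = c * q * \<bar>y - y'\<bar>" using cp q_pos by (simp add: abs_mult)
        ultimately show ?thesis by linarith
      qed
      also have "\<dots> \<le> Omega^2 * d + sig * d + c * q * d"
        using cs sg cp q_pos by (intro add_mono mult_left_mono) auto
      finally show ?thesis .
    qed
    have a2: "\<bar>om * (y - y') - 2 * (k * snd (snd (rr (x, y, z))) - k' * snd (snd (rr (x', y', z'))))\<bar>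
        \<le> om * d + 2 * (K * (2 * d) + Q * d)"
    proof -
      have "\<bar>om * (y - y')\<bar> \<le> om * d" using cs(4) om_pos by (simp add: abs_mult mult_left_mono)
      then show ?thesis using p1 by (smt (verit))
    qed
    have a3: "\<bar>- (om * (x - x'))\<bar> \<le> om * d" using cs(3) om_pos by (simp add: abs_mult mult_left_mono)
    have a4: "\<bar>2 * (k * fst (rr (x, y, z)) - k' * fst (rr (x', y', z')))\<bar> \<le> 2 * (K * (2 * d) + Q * d)"
      using p2 by simp
    show ?thesis using cs(2) a1 a2 a3 a4 by linarith
  qed
  also have "\<dots> = (1 + (Omega^2 + sig + c*q) + 2 * (om + 4 * K + 2 * Q)) * d"
    by (simp add: algebra_simps)
  finally show ?thesis unfolding K_def Q_def d_def .
qed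


lemma Ap_cont_T: "continuous_on {0..T} Ap"
  using Apc by (rule continuous_on_subset) auto

lemma GR_cont: "continuous_on {0..T} u \<Longrightarrow> continuous_on {0..T} (\<lambda>t. GR R (u t) t)"
proof -
  assume u: "continuous_on {0..T} u"
  have k: "continuous_on {0..T} (\<lambda>t. kk (clR R (fst (u t))) t)"
    unfolding kk_def clR_def using cp hbp
    by (intro continuous_on_divide continuous_on_mult continuous_on_add continuous_on_const
       continuous_on_max continuous_on_min continuous_on_fst u Ap_cont_T) auto
  have r: "continuous_on {0..T} (\<lambda>t. rr (snd (snd (u t))))"
    by (intro rr_cont continuous_on_snd u)
  show ?thesis unfolding GR_alt
    by (intro continuous_on_Pair continuous_on_diff continuous_on_add continuous_on_mult continuous_on_minus
        continuous_on_const continuous_on_fst continuous_on_snd k r u)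
qed



lemma Ap_bound: fixes T :: real obtains P where "\<And>t. t \<in> {0..T} \<Longrightarrow> \<bar>Ap t\<bar> \<le> P"
proof -
  have "compact (Ap ` {0..T})" by (intro compact_continuous_image Ap_cont_T) auto
  then have "bounded (Ap ` {0..T})" by (rule compact_imp_bounded)
  then obtain P where "\<forall>x\<in>Ap ` {0..T}. norm x \<le> P" unfolding bounded_iff by blast
  then show ?thesis using that by (metis real_norm_def atLeastAtMost_iff image_eqI)
qed

lemma picard_GR:
  assumes T: "T \<ge> 0" and R: "R \<ge> 0"
  shows "\<exists>Y. Y 0 = Y0 \<and> (\<forall>t\<in>{0..T}. (Y has_vector_derivative GR R (Y t) t) (at t within {0..T})) \<and>
     (\<forall>Z. Z 0 = Y0 \<and> (\<forall>t\<in>{0..T}. (Z has_vector_derivative GR R (Z t) t) (at t within {0..T}))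
        \<longrightarrow> (\<forall>t\<in>{0..T}. Z t = Y t))"
proof -
  obtain P where P: "\<And>t. t \<in> {0..T} \<Longrightarrow> \<bar>Ap t\<bar> \<le> P" using Ap_bound[of T] by blast
  have P0: "P \<ge> 0" using P[of 0] T by auto
  let ?L = "1 + (Omega^2 + sig + c*q) + 2 * (om + 4 * (q*(R+P)/(c*hb)) + 2 * (q/(c*hb)))"
  have L0: "?L \<ge> 0" using q_pos om_pos sg cp hbp R P0 by (simp add: add_nonneg_nonneg)
  show ?thesis
  proof (rule picard[OF T L0])
    fix t u v assume "t \<in> {0..T}"
    then show "norm (GR R u t - GR R v t) \<le> ?L * norm (u - v)" using GR_lip[OF R P, where t=t and u=u and v=v] by blast
  next
    fix u :: "real \<Rightarrow> real \<times> real \<times> real \<times> real \<times> real"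
    assume "continuous_on {0..T} u"
    then show "continuous_on {0..T} (\<lambda>t. GR R (u t) t)" by (rule GR_cont)
  qed
qed


lemma rr_unfold: "rr (a, b, e) = (a / max 1 (norm (a, b, e)), b / max 1 (norm (a, b, e)), e / max 1 (norm (a, b, e)))"
  by (simp add: rr_def)

lemma exists_T:
  assumes T: "T \<ge> 0" and Y0: "Y0 \<in> Red_space"
  shows "\<exists>Y. Y 0 = Y0 \<and> (\<forall>t\<in>{0..T}. Y t \<in> Red_space \<and> (Y has_vector_derivative G (Y t) t) (at t within {0..T}))"
proof -
  obtain A0 B0 x0 y0 z0 where Y0d: "Y0 = (A0, B0, x0, y0, z0)" and s0: "x0^2 + y0^2 + z0^2 = 1"
    using Y0 by (auto simp: Red_space_def)
  define M where "M = (c*q)^2 / (2* sig)"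
  define E0 where "E0 = Omega^2 * A0^2 + B0^2"
  define R where "R = (E0 + M*T)/Omega^2 + 1"
  have M0: "M \<ge> 0" using sg by (simp add: M_def)
  have E00: "E0 \<ge> 0" by (simp add: E0_def)
  have "(E0 + M*T)/Omega^2 \<ge> 0" using M0 E00 T Om by (intro divide_nonneg_nonneg add_nonneg_nonneg mult_nonneg_nonneg) auto
  then have R1: "R \<ge> 1" unfolding R_def by linarith
  have R0: "R \<ge> 0" using R1 by simp
  obtain Y where Y0': "Y 0 = Y0" and dYa: "\<forall>t\<in>{0..T}. (Y has_vector_derivative GR R (Y t) t) (at t within {0..T})"
    using picard_GR[OF T R0, of Y0] by (elim exE conjE) (rule that)
  have dY: "\<And>t. t \<in> {0..T} \<Longrightarrow> (Y has_vector_derivative GR R (Y t) t) (at t within {0..T})"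
    using dYa by blast
  define A where "A t = fst (Y t)" for t
  define B where "B t = fst (snd (Y t))" for t
  define x where "x t = fst (snd (snd (Y t)))" for t
  define y where "y t = fst (snd (snd (snd (Y t))))" for t
  define z where "z t = snd (snd (snd (snd (Y t))))" for t
  define k where "k t = kk (clR R (A t)) t" for t
  define m where "m t = max 1 (norm (x t, y t, z t))" for t
  have Yd: "Y t = (A t, B t, x t, y t, z t)" for t by (simp add: A_def B_def x_def y_def z_def)
  have GRd: "GR R (Y t) t = (B t, - (Omega^2) * A t - sig * B t + c * q * y t,
      om * y t - 2 * k t * (z t / m t), - (om * x t), 2 * k t * (x t / m t))" for t
    unfolding Yd by (simp add: k_def m_def rr_unfold)
  have dA: "(A has_real_derivative B t) (at t within {0..T})" and
       dB: "(B has_real_derivative (- (Omega^2) * A t - sig * B t + c * q * y t)) (at t within {0..T})" and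
       dx: "(x has_real_derivative (om * y t - 2 * k t * (z t / m t))) (at t within {0..T})" and
       dy: "(y has_real_derivative (- (om * x t))) (at t within {0..T})" and
       dz: "(z has_real_derivative (2 * k t * (x t / m t))) (at t within {0..T})"
    if t: "t \<in> {0..T}" for t
  proof -
    note d = dY[OF t, unfolded GRd]
    show "(A has_real_derivative B t) (at t within {0..T})"
      using vd_fst[OF d] unfolding has_real_derivative_iff_has_vector_derivative A_def[abs_def] by simp
    show "(B has_real_derivative (- (Omega^2) * A t - sig * B t + c * q * y t)) (at t within {0..T})"
      using vd_fst[OF vd_snd[OF d]] unfolding has_real_derivative_iff_has_vector_derivative B_def[abs_def] by simp
    show "(x has_real_derivative (om * y t - 2 * k t * (z t / m t))) (at t within {0..T})"
      using vd_fst[OF vd_snd[OF vd_snd[OF d]]] unfolding has_real_derivative_iff_has_vector_derivative x_def[abs_def] by simp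
    show "(y has_real_derivative (- (om * x t))) (at t within {0..T})"
      using vd_fst[OF vd_snd[OF vd_snd[OF vd_snd[OF d]]]] unfolding has_real_derivative_iff_has_vector_derivative y_def[abs_def] by simp
    show "(z has_real_derivative (2 * k t * (x t / m t))) (at t within {0..T})"
      using vd_snd[OF vd_snd[OF vd_snd[OF vd_snd[OF d]]]] unfolding has_real_derivative_iff_has_vector_derivative z_def[abs_def] by simp
  qed
  define V where "V t = (x t)^2 + (y t)^2 + (z t)^2" for t
  have dV: "(V has_real_derivative 0) (at t within {0..T})" if t: "t \<in> {0..T}" for t
  proof -
    have Veq: "V = (\<lambda>s. x s * x s + y s * y s + z s * z s)"
      by (simp add: V_def[abs_def] power2_eq_square)
    have "(V has_real_derivative
        ((om * y t - 2 * k t * (z t / m t)) * x t + (om * y t - 2 * k t * (z t / m t)) * x t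
       + ((- (om * x t)) * y t + (- (om * x t)) * y t)
       + ((2 * k t * (x t / m t)) * z t + (2 * k t * (x t / m t)) * z t))) (at t within {0..T})"
      unfolding Veq
      by (intro DERIV_add DERIV_mult dx[OF t] dy[OF t] dz[OF t])
    moreover have "(om * y t - 2 * k t * (z t / m t)) * x t + (om * y t - 2 * k t * (z t / m t)) * x t
       + ((- (om * x t)) * y t + (- (om * x t)) * y t)
       + ((2 * k t * (x t / m t)) * z t + (2 * k t * (x t / m t)) * z t) = 0"
      by (simp add: algebra_simps)
    ultimately show ?thesis by simp
  qed
  have V1: "V t = 1" if t: "t \<in> {0..T}" for t
  proof -
    have "((\<lambda>_. 0) has_integral (V t - V 0)) {0..t}"
    proof (rule fundamental_theorem_of_calculus)
      show "0 \<le> t" using t by simp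
      fix s assume s: "s \<in> {0..t}"
      have "(V has_real_derivative 0) (at s within {0..T})" using s t by (intro dV) auto
      then have "(V has_real_derivative 0) (at s within {0..t})"
        by (rule DERIV_subset) (use t in auto)
      then show "(V has_vector_derivative 0) (at s within {0..t})"
        by (simp add: has_real_derivative_iff_has_vector_derivative)
    qed
    then have "V t - V 0 = 0" using has_integral_0 has_integral_unique by blast
    moreover have "V 0 = 1" using Y0' s0 by (simp add: V_def x_def y_def z_def Y0d)
    ultimately show ?thesis by simp
  qed
  have yb: "\<bar>y t\<bar> \<le> 1" if t: "t \<in> {0..T}" for t
  proof -
    have "(y t)^2 \<le> 1" using V1[OF t] unfolding V_def by (smt (verit) zero_le_power2)
    then show ?thesis by (simp add: abs_square_le_1)
  qed
  define E where "E t = Omega^2 * (A t)^2 + (B t)^2" for t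
  define E' where "E' t = 2 * Omega^2 * A t * B t + 2 * B t * (- (Omega^2) * A t - sig * B t + c * q * y t)" for t
  have dE: "(E has_real_derivative E' t) (at t within {0..T})" if t: "t \<in> {0..T}" for t
  proof -
    have Eeq: "E = (\<lambda>s. Omega^2 * (A s * A s) + B s * B s)"
      by (simp add: E_def[abs_def] power2_eq_square)
    have "(E has_real_derivative (Omega^2 * (B t * A t + B t * A t)
        + ((- (Omega^2) * A t - sig * B t + c * q * y t) * B t + (- (Omega^2) * A t - sig * B t + c * q * y t) * B t)))
        (at t within {0..T})"
      unfolding Eeq by (intro DERIV_add DERIV_mult DERIV_cmult dA[OF t] dB[OF t])
    moreover have "Omega^2 * (B t * A t + B t * A t)
        + ((- (Omega^2) * A t - sig * B t + c * q * y t) * B t + (- (Omega^2) * A t - sig * B t + c * q * y t) * B t)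
        = E' t" by (simp add: E'_def algebra_simps)
    ultimately show ?thesis by simp
  qed
  have E'b: "E' t \<le> M" if t: "t \<in> {0..T}" for t
  proof -
    have "E' t = - 2 * sig * (B t)^2 + 2 * c * q * B t * y t" by (simp add: E'_def algebra_simps power2_eq_square)
    also have "\<dots> \<le> (c * q * y t)^2 / (2 * sig)"
    proof -
      have "0 \<le> (2 * sig * B t - c * q * y t)^2" by simp
      then have "- 2 * sig * (B t)^2 * (2 * sig) + 2 * c * q * B t * y t * (2 * sig) \<le> (c * q * y t)^2"
        by (simp add: power2_eq_square algebra_simps)
      then show ?thesis using sg by (simp add: field_simps)
    qed
    also have "\<dots> \<le> M"
    proof -
      have "(y t)^2 \<le> 1" using yb[OF t] by (simp add: abs_square_le_1)
      then have "(c * q * y t)^2 \<le> (c * q)^2" by (simp add: power_mult_distrib mult_left_le)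
      then show ?thesis unfolding M_def using sg by (simp add: divide_right_mono)
    qed
    finally show ?thesis .
  qed
  have Eb: "E t \<le> E0 + M * T" if t: "t \<in> {0..T}" for t
  proof -
    have i1: "(E' has_integral (E t - E 0)) {0..t}"
    proof (rule fundamental_theorem_of_calculus)
      show "0 \<le> t" using t by simp
      fix s assume s: "s \<in> {0..t}"
      have "(E has_real_derivative E' s) (at s within {0..T})" using s t by (intro dE) auto
      then have "(E has_real_derivative E' s) (at s within {0..t})"
        by (rule DERIV_subset) (use t in auto)
      then show "(E has_vector_derivative E' s) (at s within {0..t})"
        by (simp add: has_real_derivative_iff_has_vector_derivative)
    qed
    have i2: "((\<lambda>_. M) has_integral (t * M)) {0..t}" using has_integral_const_real[of M 0 t] t by simp
    have "E t - E 0 \<le> t * M" by (rule has_integral_le[OF i1 i2]) (use t E'b in auto)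
    moreover have "E 0 = E0" using Y0' by (simp add: E_def E0_def A_def B_def Y0d)
    moreover have "t * M \<le> T * M" using t M0 by (simp add: mult_right_mono)
    ultimately show ?thesis by (simp add: algebra_simps)
  qed
  have Ab: "\<bar>A t\<bar> \<le> R" if t: "t \<in> {0..T}" for t
  proof -
    have O2: "Omega^2 > 0" using Om by simp
    have "Omega^2 * (A t)^2 \<le> E t" unfolding E_def by simp
    also have "\<dots> \<le> E0 + M * T" by (rule Eb[OF t])
    also have "\<dots> < Omega^2 * R"
    proof -
      have "Omega^2 * R = (E0 + M * T) + Omega^2"
        unfolding R_def distrib_left using O2 by simp
      then show ?thesis using O2 by linarith
    qed
    also have "\<dots> \<le> Omega^2 * R^2"
    proof -
      have "R \<le> R^2" using R1 by (simp add: power2_eq_square)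
      then show ?thesis using O2 by (intro mult_left_mono) auto
    qed
    finally have "(A t)^2 < R^2" using mult_less_cancel_left_pos[OF O2] by blast
    then have "\<bar>A t\<bar>^2 < R^2" by simp
    then have "\<bar>A t\<bar> < R" using R1 power_less_imp_less_base[of "\<bar>A t\<bar>" 2 R] by linarith
    then show ?thesis by simp
  qed
  show ?thesis
  proof (intro exI conjI ballI)
    show "Y 0 = Y0" by (rule Y0')
    fix t assume t: "t \<in> {0..T}"
    have sp: "(x t)^2 + (y t)^2 + (z t)^2 = 1" using V1[OF t] by (simp add: V_def)
    then show "Y t \<in> Red_space" by (simp add: Yd Red_space_def)
    have "GR R (Y t) t = G (Y t) t" unfolding Yd by (rule GR_eq[OF sp Ab[OF t]])
    then show "(Y has_vector_derivative G (Y t) t) (at t within {0..T})" using dY[OF t] by simp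
  qed
qed


lemma cont_bound:
  fixes f :: "real \<Rightarrow> real"
  assumes "continuous_on {0..T} f"
  obtains R where "R \<ge> 0" "\<And>t. t \<in> {0..T} \<Longrightarrow> \<bar>f t\<bar> \<le> R"
proof -
  have "compact (f ` {0..T})" by (intro compact_continuous_image assms) auto
  then have "bounded (f ` {0..T})" by (rule compact_imp_bounded)
  then obtain P where P: "\<forall>x\<in>f ` {0..T}. norm x \<le> P" unfolding bounded_iff by blast
  show ?thesis
  proof (rule that[of "max P 0"])
    fix t assume "t \<in> {0..T}"
    then have "\<bar>f t\<bar> \<le> P" using P by auto
    then show "\<bar>f t\<bar> \<le> max P 0" by simp
  qed simp
qed

lemma unique_T:
  assumes T: "T \<ge> 0" and init: "Z 0 = Y 0"
    and Y: "\<And>t. t \<in> {0..T} \<Longrightarrow> Y t \<in> Red_space \<and> (Y has_vector_derivative G (Y t) t) (at t within {0..T})"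
    and Z: "\<And>t. t \<in> {0..T} \<Longrightarrow> Z t \<in> Red_space \<and> (Z has_vector_derivative G (Z t) t) (at t within {0..T})"
    and t: "t \<in> {0..T}"
  shows "Z t = Y t"
proof -
  have Yc: "continuous_on {0..T} Y"
    unfolding continuous_on_eq_continuous_within
  proof
    fix t assume "t \<in> {0..T}"
    then show "continuous (at t within {0..T}) Y" using Y[of t] has_vector_derivative_continuous by blast
  qed
  have Zc: "continuous_on {0..T} Z"
    unfolding continuous_on_eq_continuous_within
  proof
    fix t assume "t \<in> {0..T}"
    then show "continuous (at t within {0..T}) Z" using Z[of t] has_vector_derivative_continuous by blast
  qed
  obtain R1 where R1: "R1 \<ge> 0" "\<And>t. t \<in> {0..T} \<Longrightarrow> \<bar>fst (Y t)\<bar> \<le> R1"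
    using cont_bound[OF continuous_on_fst[OF Yc]] by blast
  obtain R2 where R2: "R2 \<ge> 0" "\<And>t. t \<in> {0..T} \<Longrightarrow> \<bar>fst (Z t)\<bar> \<le> R2"
    using cont_bound[OF continuous_on_fst[OF Zc]] by blast
  define R where "R = max R1 R2"
  have R0: "R \<ge> 0" using R1 by (simp add: R_def)
  have GRG: "GR R (W t) t = G (W t) t" if "W t \<in> Red_space" "\<bar>fst (W t)\<bar> \<le> R" for W t
  proof -
    obtain A B x y z where "W t = (A, B, x, y, z)" by (cases "W t") auto
    then show ?thesis using that GR_eq by (auto simp: Red_space_def)
  qed
  obtain W where W: "\<forall>Z. Z 0 = Y 0 \<and> (\<forall>t\<in>{0..T}. (Z has_vector_derivative GR R (Z t) t) (at t within {0..T}))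
        \<longrightarrow> (\<forall>t\<in>{0..T}. Z t = W t)"
    using picard_GR[OF T R0, of "Y 0"] by (elim exE conjE) (rule that)
  have "\<forall>t\<in>{0..T}. (Y has_vector_derivative GR R (Y t) t) (at t within {0..T})"
  proof
    fix t assume t: "t \<in> {0..T}"
    have "GR R (Y t) t = G (Y t) t" using Y[OF t] R1(2)[OF t] by (intro GRG) (auto simp: R_def)
    then show "(Y has_vector_derivative GR R (Y t) t) (at t within {0..T})" using Y[OF t] by simp
  qed
  then have "Y t = W t" using W t by blast
  moreover have "\<forall>t\<in>{0..T}. (Z has_vector_derivative GR R (Z t) t) (at t within {0..T})"
  proof
    fix t assume t: "t \<in> {0..T}"
    have "GR R (Z t) t = G (Z t) t" using Z[OF t] R2(2)[OF t] by (intro GRG) (auto simp: R_def)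
    then show "(Z has_vector_derivative GR R (Z t) t) (at t within {0..T})" using Z[OF t] by simp
  qed
  then have "Z t = W t" using W t init by blast
  ultimately show ?thesis by simp
qed

lemma global:
  assumes Y0: "Y0 \<in> Red_space"
  shows "\<exists>Y. Y 0 = Y0 \<and> (\<forall>t\<ge>0. Y t \<in> Red_space \<and> (Y has_vector_derivative G (Y t) t) (at t within {0..}))"
proof -
  have "\<forall>n::nat. \<exists>Y. Y 0 = Y0 \<and> (\<forall>t\<in>{0..real n + 1}. Y t \<in> Red_space \<and>
      (Y has_vector_derivative G (Y t) t) (at t within {0..real n + 1}))"
    using exists_T[OF _ Y0] by simp
  then obtain Ys where Ys0: "\<And>n. Ys n 0 = Y0"
    and Ysd: "\<And>n t. t \<in> {0..real n + 1} \<Longrightarrow> Ys n t \<in> Red_space \<and>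
      (Ys n has_vector_derivative G (Ys n t) t) (at t within {0..real n + 1})"
    by metis
  have cons: "Ys n t = Ys m t" if "t \<in> {0..min (real n) (real m) + 1}" for n m t
  proof (rule unique_T[where T = "min (real n) (real m) + 1"])
    show "0 \<le> min (real n) (real m) + 1" by simp
    show "Ys n 0 = Ys m 0" by (simp add: Ys0)
    show "t \<in> {0..min (real n) (real m) + 1}" by (rule that)
    fix s assume s: "s \<in> {0..min (real n) (real m) + 1}"
    have "Ys m s \<in> Red_space \<and> (Ys m has_vector_derivative G (Ys m s) s) (at s within {0..real m + 1})"
      using s by (intro Ysd) auto
    then show "Ys m s \<in> Red_space \<and> (Ys m has_vector_derivative G (Ys m s) s) (at s within {0..min (real n) (real m) + 1})"
      using has_vector_derivative_within_subset[of "Ys m" _ s "{0..real m + 1}" "{0..min (real n) (real m) + 1}"]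
      by auto
    have "Ys n s \<in> Red_space \<and> (Ys n has_vector_derivative G (Ys n s) s) (at s within {0..real n + 1})"
      using s by (intro Ysd) auto
    then show "Ys n s \<in> Red_space \<and> (Ys n has_vector_derivative G (Ys n s) s) (at s within {0..min (real n) (real m) + 1})"
      using has_vector_derivative_within_subset[of "Ys n" _ s "{0..real n + 1}" "{0..min (real n) (real m) + 1}"]
      by auto
  qed
  define Y where "Y t = Ys (nat \<lceil>t\<rceil>) t" for t
  have YYs: "Y t = Ys n t" if "t \<ge> 0" "t \<le> real n + 1" for n t
  proof -
    have "t \<le> real (nat \<lceil>t\<rceil>) + 1" using that by linarith
    then show ?thesis unfolding Y_def using that by (intro cons) auto
  qed
  show ?thesis
  proof (intro exI conjI allI impI)
    show "Y 0 = Y0" by (simp add: Y_def Ys0)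
    fix t :: real assume t: "t \<ge> 0"
    define n where "n = nat \<lceil>t\<rceil> + 1"
    have tn: "t + 1 \<le> real n" unfolding n_def using t by linarith
    have tY: "Y t = Ys n t" using t tn by (intro YYs) auto
    have d: "Ys n t \<in> Red_space \<and> (Ys n has_vector_derivative G (Ys n t) t) (at t within {0..real n + 1})"
      using t tn by (intro Ysd) auto
    then show "Y t \<in> Red_space" using tY by simp
    have "at t within {0..real n + 1} = at t within {0..}"
      by (rule at_within_nhd[where S = "{..<real n + 1}"]) (use t tn in auto)
    then have "(Ys n has_vector_derivative G (Y t) t) (at t within {0..})" using d tY by simp
    then show "(Y has_vector_derivative G (Y t) t) (at t within {0..})"
    proof (rule has_vector_derivative_transform_within[where d = 1])
      show "t \<in> {0..}" using t by simp
      fix s assume "s \<in> {0..}" "dist s t < 1"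
      then show "Ys n s = Y s" using tn by (intro YYs[symmetric]) (auto simp: dist_real_def)
    qed simp
  qed
qed


end


theorem lemma3p1:
  fixes Omega sig c hb p w1 w2 :: real
    and Ap :: "real \<Rightarrow> real"
    and F :: "real \<times> real \<times> real \<times> real \<times> real \<Rightarrow> real \<Rightarrow> real \<times> real \<times> real \<times> real \<times> real"
  assumes "Omega > 0" and "sig > 0" and "c > 0" and "hb > 0" and "p > 0" and "w1 < w2"
    and "continuous_on {0..} Ap"
    and "is_pushforward Omega sig c hb p w1 w2 Ap F"
  shows "\<forall>Y0\<in>Red_space. \<exists>Y. reduced_solution F Y Y0 \<and>
           (\<forall>Z. reduced_solution F Z Y0 \<longrightarrow> (\<forall>t\<ge>0. Z t = Y t))"
proof
  fix Y0 assume Y0: "Y0 \<in> Red_space"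
  interpret M: mbl Omega sig c hb p w1 w2 Ap
    using assms by unfold_locales auto
  note pf = assms(8)
  obtain Y where Yi: "Y 0 = Y0" and Yd: "\<And>t. t \<ge> 0 \<Longrightarrow> Y t \<in> Red_space \<and>
      (Y has_vector_derivative M.G (Y t) t) (at t within {0..})"
    using M.global[OF Y0] by blast
  have solY: "reduced_solution F Y Y0"
    unfolding reduced_solution_def
  proof (intro conjI allI impI)
    show "Y 0 = Y0" by (rule Yi)
    fix t :: real assume t: "t \<ge> 0"
    show "Y t \<in> Red_space" using Yd[OF t] by simp
    then show "(Y has_vector_derivative F (Y t) t) (at t within {0..})"
      using Yd[OF t] M.F_eq[OF pf _ t] by simp
  qed
  show "\<exists>Y. reduced_solution F Y Y0 \<and> (\<forall>Z. reduced_solution F Z Y0 \<longrightarrow> (\<forall>t\<ge>0. Z t = Y t))"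
  proof (intro exI conjI allI impI)
    show "reduced_solution F Y Y0" by (rule solY)
    fix Z and t :: real assume Z: "reduced_solution F Z Y0" and t: "t \<ge> 0"
    have lift: "W s \<in> Red_space \<and> (W has_vector_derivative M.G (W s) s) (at s within {0..t})"
      if W: "reduced_solution F W Y0" and s: "s \<in> {0..t}" for W s
    proof -
      have s0: "s \<ge> 0" using s by simp
      have Ws: "W s \<in> Red_space" and dW: "(W has_vector_derivative F (W s) s) (at s within {0..})"
        using W s0 unfolding reduced_solution_def by auto
      have "F (W s) s = M.G (W s) s" by (rule M.F_eq[OF pf Ws s0])
      then have "(W has_vector_derivative M.G (W s) s) (at s within {0..})" using dW by simp
      then have "(W has_vector_derivative M.G (W s) s) (at s within {0..t})"
        by (rule has_vector_derivative_within_subset) auto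
      then show ?thesis using Ws by simp
    qed
    have "Z 0 = Y 0" using Z Yi unfolding reduced_solution_def by simp
    then show "Z t = Y t"
      using M.unique_T[OF _ _ lift[OF solY] lift[OF Z], of t] t by auto
  qed
qed

end
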